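(* Let $X,Y\subseteq\omega$ and let $\prec_X$, $\prec_Y$ be transitive relations on $X$ and $Y$ respectively. Assume $f:X\to Y$ is a function which is surjective and satisfies $x\prec_X x'\iff f(x)\prec_Y f(x')$ for all $x,x'\in X$. Let $G_f=\{\langle x,f(x)\rangle\mid x\in X\}$. Then the map $\llbracket G_f\rrbracket$, given by $\llbracket G_f\rrbracket(I)=\{n\mid(\exists m\in I)\,\langle m,n\rangle\in G_f\}$, is a homeomorphism from $\mathcal{I}(\prec_X)$ onto $\mathcal{I}(\prec_Y)$. Moreover, if $\prec_X$ and $\prec_Y$ are c.e. and $f$ is computable, then $\llbracket G_f\rrbracket$ is a computable homeomorphism.
   Context: For a transitive relation $\prec$ on a set $S$, an ideal is a non-empty set $I\subseteq S$ that is a lower set ($b\prec a\in I\Rightarrow b\in I$) and directed (for $a,b\in I$ there is $c\in I$ with $a\prec c$, $b\prec c$). $\mathcal{I}(\prec)$ is the space of ideals with topology generated by $[n]_\prec=\{I\mid n\in I\}$, $n\in S$, an effective space with basic opens numbered by $n$. $\langle\cdot,\cdot\rangle$ is a computable pairing bijection on $\omega$. A computable homeomorphism is a homeomorphism such that preimages of basic open sets under it and its inverse are uniformly c.e. unions of basic open sets. *)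

theory Defs
  imports "HOL-Analysis.Analysis" "HOL-Library.Nat_Bijection"
begin

definition trans_on_set :: "nat set \<Rightarrow> (nat \<Rightarrow> nat \<Rightarrow> bool) \<Rightarrow> bool" where
  "trans_on_set S R \<longleftrightarrow>
     (\<forall>a\<in>S. \<forall>b\<in>S. \<forall>c\<in>S. R a b \<longrightarrow> R b c \<longrightarrow> R a c)"

definition is_ideal :: "nat set \<Rightarrow> (nat \<Rightarrow> nat \<Rightarrow> bool) \<Rightarrow> nat set \<Rightarrow> bool" where
  "is_ideal S R I \<longleftrightarrow>
     I \<noteq> {} \<and> I \<subseteq> S \<and>
     (\<forall>a\<in>I. \<forall>b\<in>S. R b a \<longrightarrow> b \<in> I) \<and>
     (\<forall>a\<in>I. \<forall>b\<in>I. \<exists>c\<in>I. R a c \<and> R b c)"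

definition basic_open :: "nat set \<Rightarrow> (nat \<Rightarrow> nat \<Rightarrow> bool) \<Rightarrow> nat \<Rightarrow> nat set set" where
  "basic_open S R n = {I. is_ideal S R I \<and> n \<in> I}"

definition ideal_space :: "nat set \<Rightarrow> (nat \<Rightarrow> nat \<Rightarrow> bool) \<Rightarrow> nat set topology" where
  "ideal_space S R = topology_generated_by {basic_open S R n | n. n \<in> S}"

definition induced_map :: "nat set \<Rightarrow> nat set \<Rightarrow> nat set" where
  "induced_map G I = {n. \<exists>m\<in>I. prod_encode (m, n) \<in> G}"

datatype recf = Zero | Succ | Proj nat | Cn recf "recf list" | Pr recf recf | Mn recf

inductive eval :: "recf \<Rightarrow> nat list \<Rightarrow> nat \<Rightarrow> bool" where
  eval_Zero: "eval Zero xs 0"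
| eval_Succ: "eval Succ (x # xs) (Suc x)"
| eval_Proj: "i < length xs \<Longrightarrow> eval (Proj i) xs (xs ! i)"
| eval_Cn: "length ys = length gs \<Longrightarrow> (\<forall>i<length gs. eval (gs ! i) xs (ys ! i))
             \<Longrightarrow> eval f ys z \<Longrightarrow> eval (Cn f gs) xs z"
| eval_Pr0: "eval f xs y \<Longrightarrow> eval (Pr f g) (0 # xs) y"
| eval_PrS: "eval (Pr f g) (n # xs) y \<Longrightarrow> eval g (n # y # xs) z
             \<Longrightarrow> eval (Pr f g) (Suc n # xs) z"
| eval_Mn: "eval f (y # xs) 0 \<Longrightarrow> (\<forall>z<y. \<exists>v. v \<noteq> 0 \<and> eval f (z # xs) v)
             \<Longrightarrow> eval (Mn f) xs y"

definition ce_set :: "nat set \<Rightarrow> bool" where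
  "ce_set A \<longleftrightarrow> (\<exists>c. \<forall>x. x \<in> A \<longleftrightarrow> (\<exists>y. eval c [x] y))"

definition ce_rel :: "nat set \<Rightarrow> (nat \<Rightarrow> nat \<Rightarrow> bool) \<Rightarrow> bool" where
  "ce_rel S R \<longleftrightarrow> ce_set {prod_encode (a, b) | a b. a \<in> S \<and> b \<in> S \<and> R a b}"

definition computable_on :: "nat set \<Rightarrow> (nat \<Rightarrow> nat) \<Rightarrow> bool" where
  "computable_on X f \<longleftrightarrow> (\<exists>c. \<forall>x\<in>X. eval c [x] (f x))"

text \<open>Preimages of basic opens [n]_T under h are uniformly c.e. unions of basic opens of S.\<close>
definition ce_preimages ::
  "nat set \<Rightarrow> (nat \<Rightarrow> nat \<Rightarrow> bool) \<Rightarrow> nat set \<Rightarrow> (nat \<Rightarrow> nat \<Rightarrow> bool)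
     \<Rightarrow> (nat set \<Rightarrow> nat set) \<Rightarrow> bool" where
  "ce_preimages S R T Q h \<longleftrightarrow>
     (\<exists>W. ce_set W \<and>
        (\<forall>n. {I \<in> topspace (ideal_space S R). h I \<in> basic_open T Q n}
             = (\<Union>{basic_open S R m | m. prod_encode (n, m) \<in> W})))"

definition computable_homeo ::
  "nat set \<Rightarrow> (nat \<Rightarrow> nat \<Rightarrow> bool) \<Rightarrow> nat set \<Rightarrow> (nat \<Rightarrow> nat \<Rightarrow> bool)
     \<Rightarrow> (nat set \<Rightarrow> nat set) \<Rightarrow> bool" where
  "computable_homeo S R T Q h \<longleftrightarrow>
     homeomorphic_map (ideal_space S R) (ideal_space T Q) h \<and>
     ce_preimages S R T Q h \<and>
     ce_preimages T Q S R (inv_into (topspace (ideal_space S R)) h)"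

end

theory Submission
  imports Defs
begin

lemma eval_det: "eval p xs y \<Longrightarrow> eval p xs y' \<Longrightarrow> y = y'"
proof (induction arbitrary: y' rule: eval.induct)
  case (eval_Zero xs) from eval_Zero.prems show ?case by (cases rule: eval.cases) auto
next
  case (eval_Succ x xs) from eval_Succ.prems show ?case by (cases rule: eval.cases) auto
next
  case (eval_Proj i xs) from eval_Proj.prems show ?case by (cases rule: eval.cases) auto
next
  case (eval_Cn ys gs xs f z)
  from eval_Cn.prems show ?case
  proof (cases rule: eval.cases)
    case (eval_Cn ys')
    have "ys' = ys"
    proof (rule nth_equalityI)
      show "length ys' = length ys" using eval_Cn eval_Cn.hyps(1) by simp
      fix i assume "i < length ys'"
      then show "ys' ! i = ys ! i" using eval_Cn eval_Cn.IH(1) by (metis (no_types, lifting))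
    qed
    then show ?thesis using eval_Cn eval_Cn.IH by auto
  qed
next
  case (eval_Pr0 f xs y g)
  from eval_Pr0.prems show ?case by (cases rule: eval.cases) (use eval_Pr0 in auto)
next
  case (eval_PrS f g n xs y z)
  from eval_PrS.prems show ?case by (cases rule: eval.cases) (use eval_PrS in auto)
next
  case (eval_Mn f y xs)
  from eval_Mn.prems show ?case
  proof (cases rule: eval.cases)
    case A: eval_Mn
    show ?thesis
    proof (rule ccontr)
      assume "y \<noteq> y'"
      then consider "y < y'" | "y' < y" by linarith
      then show False
      proof cases
        case 1
        then obtain v where "v \<noteq> 0" "eval f (y # xs) v" using A by blast
        then show False using eval_Mn.IH(1) by fastforce
      next
        case 2
        then obtain v where "v \<noteq> 0" "eval f (y' # xs) v" "\<And>w. eval f (y' # xs) w \<Longrightarrow> v = w"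
          using eval_Mn.IH(2) by blast
        then show False using A by blast
      qed
    qed
  qed
qed

lemma Cn_intro: "list_all2 (\<lambda>g y. eval g xs y) gs ys \<Longrightarrow> eval f ys z \<Longrightarrow> eval (Cn f gs) xs z"
  by (rule eval_Cn) (auto simp: list_all2_conv_all_nth)

lemma Pr_intro: "eval F xs (r 0) \<Longrightarrow> (\<And>i. i < n \<Longrightarrow> eval G (i # r i # xs) (r (Suc i)))
   \<Longrightarrow> eval (Pr F G) (n # xs) (r n)"
proof (induction n)
  case 0 then show ?case by (auto intro: eval_Pr0)
next
  case (Suc n) then show ?case by (auto intro: eval_PrS)
qed

lemma Proj_intro: "i < length xs \<Longrightarrow> xs ! i = v \<Longrightarrow> eval (Proj i) xs v"
  using eval_Proj by auto

lemma Succ_intro: "xs = x # ys \<Longrightarrow> v = Suc x \<Longrightarrow> eval Succ xs v"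
  using eval_Succ by auto

definition "ONE = Cn Succ [Zero]"
lemma eval_ONE: "eval ONE xs 1"
  unfolding ONE_def by (rule Cn_intro[where ys="[0]"]) (auto intro: eval_Zero Succ_intro)

definition "PRED = Pr Zero (Proj 0)"
lemma eval_PRED: "eval PRED (n # xs) (n - 1)"
proof -
  have "eval (Pr Zero (Proj 0)) (n # xs) ((\<lambda>n. n - 1) n)"
    by (rule Pr_intro) (auto intro: eval_Zero Proj_intro)
  then show ?thesis unfolding PRED_def by simp
qed

definition "ADD = Pr (Proj 0) (Cn Succ [Proj 1])"
lemma eval_ADD: "eval ADD (n # m # xs) (n + m)"
proof -
  have "eval (Pr (Proj 0) (Cn Succ [Proj 1])) (n # m # xs) ((\<lambda>n. n + m) n)"
  proof (rule Pr_intro)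
    show "eval (Proj 0) (m # xs) ((\<lambda>n. n + m) 0)" by (rule Proj_intro) auto
    fix i show "eval (Cn Succ [Proj 1]) (i # (\<lambda>n. n + m) i # m # xs) ((\<lambda>n. n + m) (Suc i))"
      by (rule Cn_intro[where ys="[i+m]"]) (auto intro: Proj_intro Succ_intro)
  qed
  then show ?thesis unfolding ADD_def by simp
qed

definition "SUBR = Pr (Proj 0) (Cn PRED [Proj 1])"
lemma eval_SUBR: "eval SUBR (n # m # xs) (m - n)"
proof -
  have "eval (Pr (Proj 0) (Cn PRED [Proj 1])) (n # m # xs) ((\<lambda>n. m - n) n)"
  proof (rule Pr_intro)
    show "eval (Proj 0) (m # xs) ((\<lambda>n. m - n) 0)" by (rule Proj_intro) auto
    fix i show "eval (Cn PRED [Proj 1]) (i # (\<lambda>n. m - n) i # m # xs) ((\<lambda>n. m - n) (Suc i))"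
    proof (rule Cn_intro[where ys="[m - i]"])
      show "eval PRED [m - i] ((\<lambda>n. m - n) (Suc i))" using eval_PRED[of "m - i" "[]"] by simp
    qed (auto intro: Proj_intro)
  qed
  then show ?thesis unfolding SUBR_def by simp
qed

definition "MULT = Pr Zero (Cn ADD [Proj 1, Proj 2])"
lemma eval_MULT: "eval MULT (n # m # xs) (n * m)"
proof -
  have "eval (Pr Zero (Cn ADD [Proj 1, Proj 2])) (n # m # xs) ((\<lambda>n. n * m) n)"
  proof (rule Pr_intro)
    show "eval Zero (m # xs) ((\<lambda>n. n * m) 0)" using eval_Zero by simp
    fix i show "eval (Cn ADD [Proj 1, Proj 2]) (i # (\<lambda>n. n * m) i # m # xs) ((\<lambda>n. n * m) (Suc i))"
    proof (rule Cn_intro[where ys="[i*m, m]"])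
      show "eval ADD [i * m, m] ((\<lambda>n. n * m) (Suc i))" using eval_ADD[of "i*m" m "[]"] by (simp add: add.commute)
    qed (auto intro: Proj_intro)
  qed
  then show ?thesis unfolding MULT_def by simp
qed

definition enc :: "nat option \<Rightarrow> nat" where
  "enc r = (case r of None \<Rightarrow> 0 | Some v \<Rightarrow> Suc v)"

lemma enc_simps[simp]: "enc None = 0" "enc (Some v) = Suc v" by (auto simp: enc_def)

primrec prit :: "(nat \<Rightarrow> nat \<Rightarrow> nat option) \<Rightarrow> nat option \<Rightarrow> nat \<Rightarrow> nat option" where
  "prit G r0 0 = r0"
| "prit G r0 (Suc i) = (case prit G r0 i of None \<Rightarrow> None | Some y \<Rightarrow> G i y)"

definition mstep :: "nat \<Rightarrow> nat \<Rightarrow> nat \<Rightarrow> nat" where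
  "mstep s r i = (if s = 1 then (if r = 0 then 0 else if r = 1 then i + 2 else 1) else s)"

primrec mst :: "(nat \<Rightarrow> nat option) \<Rightarrow> nat \<Rightarrow> nat" where
  "mst F 0 = 1"
| "mst F (Suc i) = mstep (mst F i) (enc (F i)) i"

primrec clk :: "recf \<Rightarrow> nat \<Rightarrow> nat list \<Rightarrow> nat option" where
  "clk Zero k xs = Some 0"
| "clk Succ k xs = (case xs of [] \<Rightarrow> None | x # _ \<Rightarrow> Some (Suc x))"
| "clk (Proj i) k xs = (if i < length xs then Some (xs ! i) else None)"
| "clk (Cn f gs) k xs = (let rs = map (\<lambda>g. g k xs) (map clk gs) in
      if None \<in> set rs then None else clk f k (map the rs))"
| "clk (Pr f g) k xs = (case xs of [] \<Rightarrow> None | n # ys \<Rightarrow> prit (\<lambda>i y. clk g k (i # y # ys)) (clk f k ys) n)"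
| "clk (Mn f) k xs = (let s = mst (\<lambda>y. clk f k (y # xs)) k in if 2 \<le> s then Some (s - 2) else None)"

lemma mst_props:
  "(mst F k = 1 \<longrightarrow> (\<forall>z<k. \<exists>v. v \<noteq> 0 \<and> F z = Some v)) \<and>
   (2 \<le> mst F k \<longrightarrow> mst F k - 2 < k \<and> F (mst F k - 2) = Some 0 \<and>
       (\<forall>z < mst F k - 2. \<exists>v. v \<noteq> 0 \<and> F z = Some v))"
proof (induction k)
  case 0 then show ?case by simp
next
  case (Suc k)
  show ?case
  proof (cases "mst F k = 1")
    case True
    then show ?thesis using Suc
      by (cases "F k") (auto simp: mstep_def less_Suc_eq)
  next
    case False
    then show ?thesis using Suc by (auto simp: mstep_def)
  qed
qed

lemma mst_one: "(\<forall>z<k. \<exists>v. v \<noteq> 0 \<and> F z = Some v) \<Longrightarrow> mst F k = 1"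
  by (induction k) (auto simp: mstep_def)

lemma mst_found:
  assumes "F y = Some 0" "\<forall>z<y. \<exists>v. v \<noteq> 0 \<and> F z = Some v" "y < k"
  shows "mst F k = y + 2"
  using assms(3)
proof (induction k)
  case 0 then show ?case by simp
next
  case (Suc k)
  show ?case
  proof (cases "y = k")
    case True
    then have "mst F k = 1" using mst_one assms(2) by blast
    then show ?thesis using True assms(1) by (simp add: mstep_def)
  next
    case False
    then have "mst F k = y + 2" using Suc by simp
    then show ?thesis by (simp add: mstep_def)
  qed
qed

lemma clk_Cn: "clk (Cn f gs) k xs = (if \<exists>g\<in>set gs. clk g k xs = None then None
    else clk f k (map (\<lambda>g. the (clk g k xs)) gs))"
proof -
  have "None \<in> set (map (\<lambda>g. g k xs) (map clk gs)) \<longleftrightarrow> (\<exists>g\<in>set gs. clk g k xs = None)"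
    by (auto simp: image_iff; metis)
  moreover have "map the (map (\<lambda>g. g k xs) (map clk gs)) = map (\<lambda>g. the (clk g k xs)) gs" by simp
  ultimately show ?thesis by (simp only: clk.simps Let_def)
qed

declare clk.simps(4)[simp del]

lemma clk_Cn_None: "clk (Cn f gs) k xs = Some v \<Longrightarrow>
   (\<forall>g\<in>set gs. clk g k xs \<noteq> None) \<and> clk f k (map (\<lambda>g. the (clk g k xs)) gs) = Some v"
  unfolding clk_Cn by (auto split: if_splits)

lemma clk_Cn_Some: "(\<forall>g\<in>set gs. clk g k xs \<noteq> None) \<Longrightarrow>
   clk (Cn f gs) k xs = clk f k (map (\<lambda>g. the (clk g k xs)) gs)"
  unfolding clk_Cn by auto

lemma clk_sound: "clk p k xs = Some v \<Longrightarrow> eval p xs v"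
proof (induction p arbitrary: k xs v)
  case Zero then show ?case by (auto intro: eval_Zero)
next
  case Succ then show ?case by (auto intro: eval_Succ split: list.splits)
next
  case (Proj i) then show ?case by (auto intro: eval_Proj split: if_splits)
next
  case (Cn f gs)
  from clk_Cn_None[OF Cn.prems] have A: "\<forall>g\<in>set gs. clk g k xs \<noteq> None"
    and B: "clk f k (map (\<lambda>g. the (clk g k xs)) gs) = Some v" by auto
  show ?case
  proof (rule eval_Cn[where ys="map (\<lambda>g. the (clk g k xs)) gs"])
    show "\<forall>i<length gs. eval (gs ! i) xs (map (\<lambda>g. the (clk g k xs)) gs ! i)"
    proof (intro allI impI)
      fix i assume i: "i < length gs"
      then have "gs ! i \<in> set gs" by simp
      then have "clk (gs ! i) k xs = Some (the (clk (gs ! i) k xs))" using A by auto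
      then show "eval (gs ! i) xs (map (\<lambda>g. the (clk g k xs)) gs ! i)"
        using Cn.IH(2)[OF \<open>gs ! i \<in> set gs\<close>] i by auto
    qed
    show "eval f (map (\<lambda>g. the (clk g k xs)) gs) v" using Cn.IH(1) B by blast
  qed simp
next
  case (Pr f g)
  then obtain n ys where xs: "xs = n # ys" by (cases xs) auto
  have "prit (\<lambda>i y. clk g k (i # y # ys)) (clk f k ys) n = Some v \<Longrightarrow> eval (Pr f g) (n # ys) v" for v
  proof (induction n arbitrary: v)
    case 0 then show ?case using Pr.IH(1) by (auto intro: eval_Pr0)
  next
    case (Suc n)
    then obtain y where "prit (\<lambda>i y. clk g k (i # y # ys)) (clk f k ys) n = Some y"
      "clk g k (n # y # ys) = Some v" by (auto split: option.splits)
    then show ?case using Suc.IH Pr.IH(2) by (auto intro: eval_PrS)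
  qed
  then show ?case using Pr.prems xs by simp
next
  case (Mn f)
  define F where "F = (\<lambda>y. clk f k (y # xs))"
  have s: "2 \<le> mst F k" "v = mst F k - 2" using Mn.prems by (auto simp: F_def Let_def split: if_splits)
  then have "F v = Some 0" "\<forall>z<v. \<exists>w. w \<noteq> 0 \<and> F z = Some w" using mst_props[of F k] by auto
  show ?case
  proof (rule eval_Mn)
    show "eval f (v # xs) 0" using Mn.IH \<open>F v = Some 0\<close> unfolding F_def by blast
    show "\<forall>z<v. \<exists>w. w \<noteq> 0 \<and> eval f (z # xs) w"
    proof (intro allI impI)
      fix z assume "z < v"
      then obtain w where "w \<noteq> 0" "clk f k (z # xs) = Some w"
        using \<open>\<forall>z<v. \<exists>w. w \<noteq> 0 \<and> F z = Some w\<close> unfolding F_def by blast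
      then show "\<exists>w. w \<noteq> 0 \<and> eval f (z # xs) w" using Mn.IH by blast
    qed
  qed
qed

lemma clk_mono: "clk p k xs = Some v \<Longrightarrow> k \<le> k' \<Longrightarrow> clk p k' xs = Some v"
proof (induction p arbitrary: k xs v)
  case (Cn f gs)
  from clk_Cn_None[OF Cn.prems(1)] have A: "\<forall>g\<in>set gs. clk g k xs \<noteq> None"
    and B: "clk f k (map (\<lambda>g. the (clk g k xs)) gs) = Some v" by auto
  have C: "\<forall>g\<in>set gs. clk g k' xs = clk g k xs" using A Cn.IH(2) Cn.prems(2) by force
  have M: "map (\<lambda>g. the (clk g k' xs)) gs = map (\<lambda>g. the (clk g k xs)) gs" using C by simp
  have C': "\<forall>g\<in>set gs. clk g k' xs \<noteq> None" using A C by simp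
  have "clk (Cn f gs) k' xs = clk f k' (map (\<lambda>g. the (clk g k' xs)) gs)" by (rule clk_Cn_Some[OF C'])
  also have "\<dots> = clk f k' (map (\<lambda>g. the (clk g k xs)) gs)" by (simp only: M)
  also have "\<dots> = Some v" by (rule Cn.IH(1)[OF B Cn.prems(2)])
  finally show ?case .
next
  case (Pr f g)
  then obtain n ys where xs: "xs = n # ys" by (cases xs) auto
  have "prit (\<lambda>i y. clk g k (i # y # ys)) (clk f k ys) n = Some v \<Longrightarrow>
        prit (\<lambda>i y. clk g k' (i # y # ys)) (clk f k' ys) n = Some v" for v
  proof (induction n arbitrary: v)
    case 0 then show ?case using Pr.IH(1) Pr.prems(2) by auto
  next
    case (Suc n)
    then obtain y where "prit (\<lambda>i y. clk g k (i # y # ys)) (clk f k ys) n = Some y"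
      "clk g k (n # y # ys) = Some v" by (auto split: option.splits)
    then show ?case using Suc.IH Pr.IH(2) Pr.prems(2) by auto
  qed
  then show ?case using Pr.prems xs by simp
next
  case (Mn f)
  define F where "F = (\<lambda>y. clk f k (y # xs))"
  define F' where "F' = (\<lambda>y. clk f k' (y # xs))"
  have s: "2 \<le> mst F k" "v = mst F k - 2" using Mn.prems by (auto simp: F_def Let_def split: if_splits)
  then have a: "F v = Some 0" "\<forall>z<v. \<exists>w. w \<noteq> 0 \<and> F z = Some w" "v < k" using mst_props[of F k] by auto
  have "F' v = Some 0" using a(1) Mn.IH Mn.prems(2) unfolding F_def F'_def by blast
  moreover have "\<forall>z<v. \<exists>w. w \<noteq> 0 \<and> F' z = Some w" using a(2) Mn.IH Mn.prems(2) unfolding F_def F'_def by blast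
  ultimately have "mst F' k' = v + 2" using mst_found a(3) Mn.prems(2) by simp
  then show ?case unfolding F'_def by (simp add: Let_def)
qed auto

lemma clk_complete: "eval p xs v \<Longrightarrow> \<exists>k. clk p k xs = Some v"
proof (induction rule: eval.induct)
  case (eval_Cn ys gs xs f z)
  have ev: "eventually (\<lambda>k. clk (gs ! i) k xs = Some (ys ! i)) sequentially" if i: "i < length gs" for i
  proof -
    obtain k where "clk (gs ! i) k xs = Some (ys ! i)" using eval_Cn.IH i by blast
    then show ?thesis unfolding eventually_sequentially using clk_mono by blast
  qed
  have "eventually (\<lambda>k. \<forall>i\<in>{..<length gs}. clk (gs ! i) k xs = Some (ys ! i)) sequentially"
    by (rule eventually_ball_finite) (use ev in auto)
  moreover have "eventually (\<lambda>k. clk f k ys = Some z) sequentially"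
    using eval_Cn.IH(2) clk_mono unfolding eventually_sequentially by blast
  ultimately have "eventually (\<lambda>k. (\<forall>i\<in>{..<length gs}. clk (gs ! i) k xs = Some (ys ! i)) \<and> clk f k ys = Some z) sequentially"
    by (rule eventually_conj)
  then obtain N where N: "\<forall>n\<ge>N. (\<forall>i\<in>{..<length gs}. clk (gs ! i) n xs = Some (ys ! i)) \<and> clk f n ys = Some z"
    unfolding eventually_sequentially by blast
  obtain k where k: "\<forall>i<length gs. clk (gs ! i) k xs = Some (ys ! i)" "clk f k ys = Some z"
    using N[rule_format, of N] by auto
  have "map (\<lambda>g. the (clk g k xs)) gs = ys"
    by (rule nth_equalityI) (use k eval_Cn.hyps(1) in auto)
  moreover have "\<forall>g\<in>set gs. clk g k xs \<noteq> None" using k by (auto simp: in_set_conv_nth)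
  ultimately show ?case using clk_Cn_Some k by metis
next
  case (eval_PrS f g n xs y z)
  obtain k1 where k1: "clk (Pr f g) k1 (n # xs) = Some y" using eval_PrS.IH by blast
  obtain k2 where k2: "clk g k2 (n # y # xs) = Some z" using eval_PrS.IH by blast
  have "clk (Pr f g) (max k1 k2) (n # xs) = Some y" "clk g (max k1 k2) (n # y # xs) = Some z"
    using clk_mono k1 k2 by (metis max.cobounded1 max.cobounded2)+
  then show ?case by (intro exI[of _ "max k1 k2"]) auto
next
  case (eval_Mn f y xs)
  have ev: "eventually (\<lambda>k. \<exists>v. v \<noteq> 0 \<and> clk f k (z # xs) = Some v) sequentially" if z: "z < y" for z
  proof -
    obtain v k where "v \<noteq> 0" "clk f k (z # xs) = Some v" using eval_Mn.IH z by blast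
    then show ?thesis unfolding eventually_sequentially using clk_mono by blast
  qed
  have "eventually (\<lambda>k. \<forall>z\<in>{..<y}. \<exists>v. v \<noteq> 0 \<and> clk f k (z # xs) = Some v) sequentially"
    by (rule eventually_ball_finite) (use ev in auto)
  moreover have "eventually (\<lambda>k. clk f k (y # xs) = Some 0) sequentially"
    using eval_Mn.IH(1) clk_mono unfolding eventually_sequentially by blast
  moreover have "eventually (\<lambda>k. y < k) sequentially" by (rule eventually_gt_at_top)
  ultimately have "eventually (\<lambda>k. (\<forall>z\<in>{..<y}. \<exists>v. v \<noteq> 0 \<and> clk f k (z # xs) = Some v) \<and>
     clk f k (y # xs) = Some 0 \<and> y < k) sequentially"
    by (intro eventually_conj)
  then obtain N where N: "\<forall>n\<ge>N. (\<forall>z\<in>{..<y}. \<exists>v. v \<noteq> 0 \<and> clk f n (z # xs) = Some v) \<and>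
     clk f n (y # xs) = Some 0 \<and> y < n"
    unfolding eventually_sequentially by blast
  obtain k where k: "\<forall>z<y. \<exists>v. v \<noteq> 0 \<and> clk f k (z # xs) = Some v"
     "clk f k (y # xs) = Some 0" "y < k"
    using N[rule_format, of N] by auto
  have "mst (\<lambda>z. clk f k (z # xs)) k = y + 2" by (rule mst_found) (use k in auto)
  then show ?case by (intro exI[of _ k]) (simp add: Let_def)
qed auto

lemma eval_iff_clk: "eval p xs v \<longleftrightarrow> (\<exists>k. clk p k xs = Some v)"
  using clk_sound clk_complete by blast

datatype aexp = V nat | K nat | Plus aexp aexp | Minus aexp aexp | Times aexp aexp
  | Call recf "nat list \<Rightarrow> nat" "aexp list"

primrec aval :: "aexp \<Rightarrow> nat list \<Rightarrow> nat" where
  "aval (V i) xs = xs ! i"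
| "aval (K n) xs = n"
| "aval (Plus a b) xs = aval a xs + aval b xs"
| "aval (Minus a b) xs = aval a xs - aval b xs"
| "aval (Times a b) xs = aval a xs * aval b xs"
| "aval (Call p F es) xs = F (map (\<lambda>a. a xs) (map aval es))"

lemma aval_Call[simp]: "aval (Call p F es) xs = F (map (\<lambda>e. aval e xs) es)" by (simp add: comp_def)
declare aval.simps(6)[simp del]

primrec kconst :: "nat \<Rightarrow> recf" where
  "kconst 0 = Zero"
| "kconst (Suc n) = Cn Succ [kconst n]"

lemma eval_kconst: "eval (kconst n) xs n"
  by (induction n) (auto intro!: eval_Zero Cn_intro Succ_intro)

primrec acomp :: "aexp \<Rightarrow> recf" where
  "acomp (V i) = Proj i"
| "acomp (K n) = kconst n"
| "acomp (Plus a b) = Cn ADD [acomp a, acomp b]"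
| "acomp (Minus a b) = Cn SUBR [acomp b, acomp a]"
| "acomp (Times a b) = Cn MULT [acomp a, acomp b]"
| "acomp (Call p F es) = Cn p (map acomp es)"

primrec awf :: "aexp \<Rightarrow> nat \<Rightarrow> bool" where
  "awf (V i) n = (i < n)"
| "awf (K m) n = True"
| "awf (Plus a b) n = (awf a n \<and> awf b n)"
| "awf (Minus a b) n = (awf a n \<and> awf b n)"
| "awf (Times a b) n = (awf a n \<and> awf b n)"
| "awf (Call p F es) n = ((\<forall>ys. length ys = length es \<longrightarrow> eval p ys (F ys)) \<and>
      list_all id (map (\<lambda>a. a n) (map awf es)))"

lemma awf_Call[simp]: "awf (Call p F es) n = ((\<forall>ys. length ys = length es \<longrightarrow> eval p ys (F ys)) \<and>
      (\<forall>e\<in>set es. awf e n))"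
  by (simp add: list_all_iff)
declare awf.simps(6)[simp del]

lemma acomp_correct: "awf e (length xs) \<Longrightarrow> eval (acomp e) xs (aval e xs)"
proof (induction e)
  case (V i) then show ?case by (auto intro: Proj_intro)
next
  case (K n) then show ?case by (simp add: eval_kconst)
next
  case (Plus a b) then show ?case
    by (auto intro!: Cn_intro[where ys="[aval a xs, aval b xs]"] eval_ADD[of _ _ "[]", simplified])
next
  case (Minus a b) then show ?case
    by (auto intro!: Cn_intro[where ys="[aval b xs, aval a xs]"] eval_SUBR[of _ _ "[]", simplified])
next
  case (Times a b) then show ?case
    by (auto intro!: Cn_intro[where ys="[aval a xs, aval b xs]"] eval_MULT[of _ _ "[]", simplified])
next
  case (Call p F es)
  show ?case
  proof (simp, rule Cn_intro[where ys="map (\<lambda>e. aval e xs) es"])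
    show "list_all2 (\<lambda>g y. eval g xs y) (map acomp es) (map (\<lambda>e. aval e xs) es)"
      using Call by (auto simp: list_all2_conv_all_nth)
    show "eval p (map (\<lambda>e. aval e xs) es) (F (map (\<lambda>e. aval e xs) es))"
      using Call.prems by simp
  qed
qed

lemma map_nth_upt_drop: "map (\<lambda>j. l ! j) [m..<length l] = drop m l"
  by (rule nth_equalityI) auto

definition encT :: "recf \<Rightarrow> nat list \<Rightarrow> nat" where
  "encT p ys = enc (clk p (hd ys) (tl ys))"

definition SGe :: "aexp \<Rightarrow> aexp" where "SGe x = Minus (K 1) (Minus (K 1) x)"
definition E1 :: "aexp \<Rightarrow> aexp" where "E1 x = Times (Minus (K 1) (Minus x (K 1))) (SGe x)"

lemma aval_SGe[simp]: "aval (SGe x) l = (if aval x l = 0 then 0 else 1)" by (simp add: SGe_def)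
lemma awf_SGe[simp]: "awf (SGe x) n = awf x n" by (simp add: SGe_def)
lemma aval_E1[simp]: "aval (E1 x) l = (if aval x l = 1 then 1 else 0)"
  by (cases "aval x l") (auto simp: E1_def)
lemma awf_E1[simp]: "awf (E1 x) n = awf x n" by (simp add: E1_def)

primrec prodsg :: "aexp list \<Rightarrow> aexp" where
  "prodsg [] = K 1"
| "prodsg (e # es) = Times (SGe e) (prodsg es)"

lemma aval_prodsg: "aval (prodsg es) l = (if \<forall>e\<in>set es. aval e l \<noteq> 0 then 1 else 0)"
  by (induction es) auto
lemma awf_prodsg: "awf (prodsg es) n = (\<forall>e\<in>set es. awf e n)"
  by (induction es) auto

definition STEPexp :: aexp where
  "STEPexp = Plus (Times (E1 (V 0)) (Times (SGe (V 1)) (Plus (Times (E1 (V 1)) (Plus (V 2) (K 2)))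
       (Minus (K 1) (E1 (V 1)))))) (Times (Minus (K 1) (E1 (V 0))) (V 0))"

definition "STEP = acomp STEPexp"

lemma eval_STEP: "length l = 3 \<Longrightarrow> eval STEP l (mstep (l!0) (l!1) (l!2))"
proof -
  assume l: "length l = 3"
  have "eval STEP l (aval STEPexp l)" unfolding STEP_def
    by (rule acomp_correct) (use l in \<open>simp add: STEPexp_def\<close>)
  moreover have "aval STEPexp l = mstep (l!0) (l!1) (l!2)"
    by (simp add: STEPexp_def mstep_def)
  ultimately show ?thesis by simp
qed

fun T :: "nat \<Rightarrow> recf \<Rightarrow> recf" where
  "T a Zero = acomp (K 1)"
| "T a Succ = (if a = 0 then Zero else acomp (Plus (V 1) (K 2)))"
| "T a (Proj i) = (if i < a then acomp (Plus (V (Suc i)) (K 1)) else Zero)"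
| "T a (Cn f gs) = acomp (Times (prodsg (map (\<lambda>g. Call (T a g) (encT g) (map V [0..<Suc a])) gs))
       (Call (T (length gs) f) (encT f)
          (V 0 # map (\<lambda>g. Minus (Call (T a g) (encT g) (map V [0..<Suc a])) (K 1)) gs)))"
| "T a (Pr f g) = (if a = 0 then Zero else acomp (Call
        (Pr (T (a - 1) f) (acomp (Times (SGe (V 1))
            (Call (T (Suc a) g) (encT g) (V 2 # V 0 # Minus (V 1) (K 1) # map V [3..<a+2])))))
        (\<lambda>l. enc (prit (\<lambda>i y. clk g (l!1) (i # y # drop 2 l)) (clk f (l!1) (drop 2 l)) (l!0)))
        (V 1 # V 0 # map V [2..<Suc a])))"
| "T a (Mn f) = acomp (Minus (Call
        (Pr ONE (acomp (Call STEP (\<lambda>l. mstep (l!0) (l!1) (l!2))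
             [V 1, Call (T (Suc a) f) (encT f) (V 2 # V 0 # map V [3..<a+3]), V 0])))
        (\<lambda>l. mst (\<lambda>y. clk f (l!1) (y # drop 2 l)) (l!0))
        (V 0 # map V [0..<Suc a])) (K 1))"

declare upt_Suc[simp del]

lemma map_nth_upt_Suc: "length ys = Suc a \<Longrightarrow> map (\<lambda>j. ys ! j) [0..<Suc a] = ys"
  by (metis map_nth)

lemma T_correct: "length ys = Suc a \<Longrightarrow> eval (T a p) ys (encT p ys)"
proof (induction p arbitrary: a ys)
  case Zero
  have "eval (acomp (K 1)) ys (aval (K 1) ys)" by (rule acomp_correct) simp
  then show ?case by (simp add: encT_def)
next
  case Succ
  then obtain k xs where ys: "ys = k # xs" "length xs = a" by (cases ys) auto
  show ?case
  proof (cases a)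
    case 0 then show ?thesis using ys by (simp add: encT_def eval_Zero)
  next
    case (Suc b)
    then obtain x zs where "xs = x # zs" using ys by (cases xs) auto
    moreover have "eval (acomp (Plus (V 1) (K 2))) ys (aval (Plus (V 1) (K 2)) ys)"
      by (rule acomp_correct) (use ys Suc in simp)
    ultimately show ?thesis using ys Suc by (simp add: encT_def)
  qed
next
  case (Proj i)
  then obtain k xs where ys: "ys = k # xs" "length xs = a" by (cases ys) auto
  show ?case
  proof (cases "i < a")
    case False then show ?thesis using ys by (simp add: encT_def eval_Zero)
  next
    case True
    have "eval (acomp (Plus (V (Suc i)) (K 1))) ys (aval (Plus (V (Suc i)) (K 1)) ys)"
      by (rule acomp_correct) (use ys True in simp)
    then show ?thesis using ys True by (simp add: encT_def)
  qed
next
  case (Cn f gs)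
  then obtain k xs where ys: "ys = k # xs" "length xs = a" by (cases ys) auto
  define G where "G = (\<lambda>g. Call (T a g) (encT g) (map V [0..<Suc a]))"
  define e where "e = Times (prodsg (map G gs))
       (Call (T (length gs) f) (encT f) (V 0 # map (\<lambda>g. Minus (G g) (K 1)) gs))"
  have Te: "T a (Cn f gs) = acomp e" unfolding e_def G_def by simp
  have awfG: "awf (G g) (length ys)" if "g \<in> set gs" for g
    using Cn.IH(2)[OF that] Cn.prems unfolding G_def by auto
  have avG: "aval (G g) ys = encT g ys" for g
    unfolding G_def using map_nth_upt_Suc[OF Cn.prems] by (simp add: o_def)
  have "awf e (length ys)" unfolding e_def
    using awfG Cn.IH(1) Cn.prems by (auto simp: awf_prodsg)
  then have ev: "eval (T a (Cn f gs)) ys (aval e ys)" unfolding Te by (rule acomp_correct)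
  have "aval e ys = encT (Cn f gs) ys"
  proof (cases "\<exists>g\<in>set gs. clk g k xs = None")
    case True
    then obtain g0 where g0: "g0 \<in> set gs" "clk g0 k xs = None" by blast
    then have "aval (G g0) ys = 0" using avG ys by (simp add: encT_def)
    then have "\<not> (\<forall>g\<in>set gs. aval (G g) ys \<noteq> 0)" using g0 by blast
    then have "aval (prodsg (map G gs)) ys = 0" by (simp add: aval_prodsg)
    moreover have "encT (Cn f gs) ys = 0" using True ys by (simp add: encT_def clk_Cn)
    ultimately show ?thesis unfolding e_def by simp
  next
    case False
    then have "\<forall>g\<in>set gs. aval (G g) ys \<noteq> 0" using avG ys by (auto simp: encT_def)
    moreover have "map (\<lambda>g. aval (G g) ys - 1) gs = map (\<lambda>g. the (clk g k xs)) gs"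
      using avG ys False by (auto simp: encT_def)
    ultimately have P1: "aval (prodsg (map G gs)) ys = 1"
      and M: "map (\<lambda>g. aval (G g) ys - 1) gs = map (\<lambda>g. the (clk g k xs)) gs"
      by (auto simp: aval_prodsg)
    have y0: "ys ! 0 = k" using ys by simp
    have "aval e ys = aval (prodsg (map G gs)) ys * encT f (k # map (\<lambda>g. aval (G g) ys - 1) gs)"
      unfolding e_def by (simp add: o_def y0)
    then have "aval e ys = encT f (k # map (\<lambda>g. the (clk g k xs)) gs)"
      using P1 M by (simp del: map_eq_conv)
    moreover have "encT (Cn f gs) ys = encT f (k # map (\<lambda>g. the (clk g k xs)) gs)"
      using False ys clk_Cn_Some[of gs k xs f] by (simp add: encT_def)
    ultimately show ?thesis by simp
  qed
  then show ?case using ev by simp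
next
  case (Pr f g)
  then obtain k xs where ys: "ys = k # xs" "length xs = a" by (cases ys) auto
  show ?case
  proof (cases a)
    case 0 then show ?thesis using ys by (simp add: encT_def eval_Zero)
  next
    case (Suc b)
    then obtain n zs where xs: "xs = n # zs" "length zs = b" using ys by (cases xs) auto
    define Gexp where "Gexp = Times (SGe (V 1))
            (Call (T (Suc a) g) (encT g) (V 2 # V 0 # Minus (V 1) (K 1) # map V [3..<a+2]))"
    define Fs where "Fs = (\<lambda>l. enc (prit (\<lambda>i y. clk g (l!1) (i # y # drop 2 l)) (clk f (l!1) (drop 2 l)) (l!0)))"
    define P where "P = Pr (T (a - 1) f) (acomp Gexp)"
    have TP: "T a (Pr f g) = acomp (Call P Fs (V 1 # V 0 # map V [2..<Suc a]))"
      using Suc unfolding P_def Fs_def Gexp_def by simp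
    have Pok: "eval P l (Fs l)" if l: "length l = Suc a" for l
    proof -
      obtain n' k' zs' where l': "l = n' # k' # zs'" "length zs' = b"
      proof -
        obtain n' r' where "l = n' # r'" using l by (cases l) auto
        moreover obtain k' zs' where "r' = k' # zs'" using l Suc \<open>l = n' # r'\<close> by (cases r') auto
        ultimately show ?thesis using that l Suc by simp
      qed
      have IHg: "\<forall>ys. length ys = Suc (Suc a) \<longrightarrow> eval (T (Suc a) g) ys (encT g ys)"
        using Pr.IH(2) by blast
      define r where "r = (\<lambda>i. enc (prit (\<lambda>i y. clk g k' (i # y # zs')) (clk f k' zs') i))"
      have "eval P (n' # k' # zs') (r n')" unfolding P_def
      proof (rule Pr_intro)
        show "eval (T (a - 1) f) (k' # zs') (r 0)"
          using Pr.IH(1)[of "k' # zs'" "a - 1"] l' Suc by (simp add: r_def encT_def)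
        fix i
        have "awf Gexp (length (i # r i # k' # zs'))" unfolding Gexp_def
          using IHg l' Suc by simp
        then have "eval (acomp Gexp) (i # r i # k' # zs') (aval Gexp (i # r i # k' # zs'))"
          by (rule acomp_correct)
        moreover have "map (\<lambda>j. (i # r i # k' # zs') ! j) [3..<a+2] = zs'"
          using map_nth_upt_drop[of "i # r i # k' # zs'" 3] l' Suc by simp
        moreover have "aval Gexp (i # r i # k' # zs') = r (Suc i)"
        proof -
          have "aval Gexp (i # r i # k' # zs') = (if r i = 0 then 0 else 1) * encT g (k' # i # (r i - 1) # zs')"
            unfolding Gexp_def using \<open>map (\<lambda>j. (i # r i # k' # zs') ! j) [3..<a+2] = zs'\<close> by (simp add: o_def)
          also have "\<dots> = r (Suc i)"
            by (cases "prit (\<lambda>i y. clk g k' (i # y # zs')) (clk f k' zs') i") (auto simp: r_def encT_def)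
          finally show ?thesis .
        qed
        ultimately show "eval (acomp Gexp) (i # r i # k' # zs') (r (Suc i))" by simp
      qed
      then show ?thesis using l' by (simp add: Fs_def r_def)
    qed
    have "awf (Call P Fs (V 1 # V 0 # map V [2..<Suc a])) (length ys)"
      using Pok ys Suc by auto
    then have "eval (T a (Pr f g)) ys (aval (Call P Fs (V 1 # V 0 # map V [2..<Suc a])) ys)"
      unfolding TP by (rule acomp_correct)
    moreover have "map (\<lambda>j. ys ! j) [2..<Suc a] = zs"
      using map_nth_upt_drop[of ys 2] ys xs Suc by simp
    ultimately show ?thesis using ys xs by (simp add: Fs_def encT_def o_def)
  qed
next
  case (Mn f)
  then obtain k xs where ys: "ys = k # xs" "length xs = a" by (cases ys) auto
  define Gexp where "Gexp = Call STEP (\<lambda>l. mstep (l!0) (l!1) (l!2))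
             [V 1, Call (T (Suc a) f) (encT f) (V 2 # V 0 # map V [3..<a+3]), V 0]"
  define Fs where "Fs = (\<lambda>l. mst (\<lambda>y. clk f (l!1) (y # drop 2 l)) (l!0))"
  define P where "P = Pr ONE (acomp Gexp)"
  have TP: "T a (Mn f) = acomp (Minus (Call P Fs (V 0 # map V [0..<Suc a])) (K 1))"
    unfolding P_def Fs_def Gexp_def by simp
  have Pok: "eval P l (Fs l)" if l: "length l = Suc (Suc a)" for l
  proof -
    obtain n' k' zs' where l': "l = n' # k' # zs'" "length zs' = a"
    proof -
      obtain n' r' where "l = n' # r'" using l by (cases l) auto
      moreover obtain k' zs' where "r' = k' # zs'" using l \<open>l = n' # r'\<close> by (cases r') auto
      ultimately show ?thesis using that l by simp
    qed
    have IHf: "\<forall>ys. length ys = Suc (Suc a) \<longrightarrow> eval (T (Suc a) f) ys (encT f ys)"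
      using Mn.IH by blast
    have IHS: "\<forall>ys. length ys = 3 \<longrightarrow> eval STEP ys (mstep (ys!0) (ys!1) (ys!2))"
      using eval_STEP by blast
    define r where "r = mst (\<lambda>y. clk f k' (y # zs'))"
    have "eval P (n' # k' # zs') (r n')" unfolding P_def
    proof (rule Pr_intro)
      show "eval ONE (k' # zs') (r 0)" using eval_ONE by (simp add: r_def)
      fix i
      have "awf Gexp (length (i # r i # k' # zs'))" unfolding Gexp_def
        using IHf IHS l' by simp
      then have "eval (acomp Gexp) (i # r i # k' # zs') (aval Gexp (i # r i # k' # zs'))"
        by (rule acomp_correct)
      moreover have "map (\<lambda>j. (i # r i # k' # zs') ! j) [3..<a+3] = zs'"
      proof -
        have e3: "a + 3 = length (i # r i # k' # zs')" using l' by simp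
        show ?thesis unfolding e3 map_nth_upt_drop by simp
      qed
      moreover have "aval Gexp (i # r i # k' # zs') = r (Suc i)"
        unfolding Gexp_def using \<open>map (\<lambda>j. (i # r i # k' # zs') ! j) [3..<a+3] = zs'\<close>
        by (simp add: r_def encT_def o_def)
      ultimately show "eval (acomp Gexp) (i # r i # k' # zs') (r (Suc i))" by simp
    qed
    then show ?thesis using l' by (simp add: Fs_def r_def)
  qed
  have "awf (Minus (Call P Fs (V 0 # map V [0..<Suc a])) (K 1)) (length ys)"
    using Pok ys by auto
  then have "eval (T a (Mn f)) ys (aval (Minus (Call P Fs (V 0 # map V [0..<Suc a])) (K 1)) ys)"
    unfolding TP by (rule acomp_correct)
  moreover have "map (\<lambda>j. ys ! j) [0..<Suc a] = ys" using map_nth_upt_Suc Mn.prems by blast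
  moreover have "mst (\<lambda>y. clk f k (y # xs)) k - 1 = encT (Mn f) ys"
    by (cases "mst (\<lambda>y. clk f k (y # xs)) k") (auto simp: encT_def ys Let_def)
  ultimately show ?case using ys by (simp add: Fs_def o_def)
qed

definition "TRI = Pr Zero (acomp (Plus (V 1) (Plus (V 0) (K 1))))"

lemma eval_TRI: "eval TRI (n # xs) (triangle n)"
proof -
  have "eval TRI (n # xs) (triangle n)" unfolding TRI_def
  proof (rule Pr_intro)
    show "eval Zero xs (triangle 0)" using eval_Zero by simp
    fix i
    have "eval (acomp (Plus (V 1) (Plus (V 0) (K 1)))) (i # triangle i # xs)
           (aval (Plus (V 1) (Plus (V 0) (K 1))) (i # triangle i # xs))"
      by (rule acomp_correct) simp
    then show "eval (acomp (Plus (V 1) (Plus (V 0) (K 1)))) (i # triangle i # xs) (triangle (Suc i))"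
      by simp
  qed
  then show ?thesis .
qed

lemma TRI_ok: "\<forall>ys. length ys = Suc 0 \<longrightarrow> eval TRI ys (triangle (hd ys))"
  by (auto simp: length_Suc_conv eval_TRI)

definition triE :: "aexp \<Rightarrow> aexp" where "triE e = Call TRI (\<lambda>l. triangle (hd l)) [e]"
lemma aval_triE[simp]: "aval (triE e) l = triangle (aval e l)" by (simp add: triE_def)
lemma awf_triE[simp]: "awf (triE e) n = awf e n" by (simp add: triE_def TRI_ok)

definition encE :: "aexp \<Rightarrow> aexp \<Rightarrow> aexp" where "encE a b = Plus (triE (Plus a b)) a"
lemma aval_encE[simp]: "aval (encE a b) l = prod_encode (aval a l, aval b l)"
  by (simp add: encE_def prod_encode_def)
lemma awf_encE[simp]: "awf (encE a b) n = (awf a n \<and> awf b n)" by (auto simp: encE_def)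

primrec sd :: "nat \<Rightarrow> nat" where
  "sd 0 = 0"
| "sd (Suc x) = sd x + (1 - (triangle (sd x + 1) - Suc x))"

lemma sd_bounds: "triangle (sd x) \<le> x \<and> x < triangle (Suc (sd x))"
proof (induction x)
  case 0 then show ?case by simp
next
  case (Suc x)
  show ?case
  proof (cases "triangle (sd x + 1) \<le> Suc x")
    case True
    then have "sd (Suc x) = sd x + 1" by simp
    then show ?thesis using Suc True by simp
  next
    case False
    then have "sd (Suc x) = sd x" by simp
    then show ?thesis using Suc False by simp
  qed
qed

lemma prod_decode_sd: "prod_decode x = (x - triangle (sd x), sd x - (x - triangle (sd x)))"
proof -
  define s where "s = sd x"
  define m where "m = x - triangle s"
  have b: "triangle s \<le> x" "x < triangle (Suc s)" using sd_bounds[of x] by (auto simp: s_def)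
  then have x: "x = triangle s + m" "m \<le> s" by (auto simp: m_def)
  have "prod_decode x = prod_decode_aux s m" using x prod_decode_triangle_add by simp
  also have "\<dots> = (m, s - m)" using x by (subst prod_decode_aux.simps) simp
  finally show ?thesis by (simp add: s_def m_def)
qed

definition "SDP = Pr Zero (acomp (Plus (V 1) (Minus (K 1) (Minus (triE (Plus (V 1) (K 1))) (Plus (V 0) (K 1))))))"

lemma eval_SDP: "eval SDP (n # xs) (sd n)"
proof -
  let ?e = "Plus (V 1) (Minus (K 1) (Minus (triE (Plus (V 1) (K 1))) (Plus (V 0) (K 1))))"
  have "eval SDP (n # xs) (sd n)" unfolding SDP_def
  proof (rule Pr_intro)
    show "eval Zero xs (sd 0)" using eval_Zero by simp
    fix i
    have "eval (acomp ?e) (i # sd i # xs) (aval ?e (i # sd i # xs))"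
      by (rule acomp_correct) simp
    then show "eval (acomp ?e) (i # sd i # xs) (sd (Suc i))" by simp
  qed
  then show ?thesis .
qed

lemma SDP_ok: "\<forall>ys. length ys = Suc 0 \<longrightarrow> eval SDP ys (sd (hd ys))"
  by (auto simp: length_Suc_conv eval_SDP)

definition sdE :: "aexp \<Rightarrow> aexp" where "sdE e = Call SDP (\<lambda>l. sd (hd l)) [e]"
lemma aval_sdE[simp]: "aval (sdE e) l = sd (aval e l)" by (simp add: sdE_def)
lemma awf_sdE[simp]: "awf (sdE e) n = awf e n" by (simp add: sdE_def SDP_ok)

definition fstE :: "aexp \<Rightarrow> aexp" where "fstE e = Minus e (triE (sdE e))"
definition sndE :: "aexp \<Rightarrow> aexp" where "sndE e = Minus (sdE e) (fstE e)"
lemma aval_fstE[simp]: "aval (fstE e) l = fst (prod_decode (aval e l))"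
  by (simp add: fstE_def prod_decode_sd)
lemma aval_sndE[simp]: "aval (sndE e) l = snd (prod_decode (aval e l))"
  by (simp add: sndE_def fstE_def prod_decode_sd)
lemma awf_fstE[simp]: "awf (fstE e) n = awf e n" by (simp add: fstE_def)
lemma awf_sndE[simp]: "awf (sndE e) n = awf e n" by (simp add: sndE_def)

lemma ce_search:
  assumes "awf e 2"
  shows "ce_set {x. \<exists>y. aval e [y, x] = 0}"
proof -
  have ev: "eval (acomp e) [y, x] (aval e [y, x])" for y x
    by (rule acomp_correct) (use assms in \<open>simp add: numeral_2_eq_2\<close>)
  have "x \<in> {x. \<exists>y. aval e [y, x] = 0} \<longleftrightarrow> (\<exists>r. eval (Mn (acomp e)) [x] r)" for x
  proof
    assume "x \<in> {x. \<exists>y. aval e [y, x] = 0}"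
    then have ex: "\<exists>y. aval e [y, x] = 0" by simp
    define y0 where "y0 = (LEAST y. aval e [y, x] = 0)"
    have "aval e [y0, x] = 0" unfolding y0_def using ex by (rule LeastI_ex)
    moreover have "\<forall>z<y0. aval e [z, x] \<noteq> 0" unfolding y0_def using not_less_Least by blast
    ultimately have "eval (Mn (acomp e)) [x] y0"
      using ev by (intro eval_Mn) (auto, metis)
    then show "\<exists>r. eval (Mn (acomp e)) [x] r" by blast
  next
    assume "\<exists>r. eval (Mn (acomp e)) [x] r"
    then obtain r where "eval (Mn (acomp e)) [x] r" by blast
    then have "eval (acomp e) [r, x] 0" by (cases rule: eval.cases) auto
    then have "aval e [r, x] = 0" using ev eval_det by blast
    then show "x \<in> {x. \<exists>y. aval e [y, x] = 0}" by blast
  qed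
  then show ?thesis unfolding ce_set_def by blast
qed

definition absdiff :: "aexp \<Rightarrow> aexp \<Rightarrow> aexp" where "absdiff a b = Plus (Minus a b) (Minus b a)"
lemma aval_absdiff[simp]: "aval (absdiff a b) l = 0 \<longleftrightarrow> aval a l = aval b l"
  by (auto simp: absdiff_def)
lemma awf_absdiff[simp]: "awf (absdiff a b) n = (awf a n \<and> awf b n)" by (auto simp: absdiff_def)

lemma T1_ok: "\<forall>ys. length ys = Suc 1 \<longrightarrow> eval (T 1 p) ys (encT p ys)"
  using T_correct by blast

lemma ce_W1: "ce_set {prod_encode (n, m) | n m. eval cf [m] n}"
proof -
  define e where "e = absdiff (Call (T 1 cf) (encT cf) [V 0, sndE (V 1)]) (Plus (fstE (V 1)) (K 1))"
  have "awf e 2" unfolding e_def using T1_ok[of cf] by (simp add: numeral_2_eq_2)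
  then have ce: "ce_set {x. \<exists>y. aval e [y, x] = 0}" by (rule ce_search)
  have "{x. \<exists>y. aval e [y, x] = 0} = {prod_encode (n, m) | n m. eval cf [m] n}"
  proof (intro equalityI subsetI)
    fix x assume "x \<in> {x. \<exists>y. aval e [y, x] = 0}"
    then obtain y where "aval e [y, x] = 0" by blast
    then have "clk cf y [snd (prod_decode x)] = Some (fst (prod_decode x))"
      unfolding e_def by (simp add: encT_def enc_def split: option.splits)
    then have "eval cf [snd (prod_decode x)] (fst (prod_decode x))" using clk_sound by blast
    moreover have "x = prod_encode (fst (prod_decode x), snd (prod_decode x))" by simp
    ultimately show "x \<in> {prod_encode (n, m) | n m. eval cf [m] n}" by blast
  next
    fix x assume "x \<in> {prod_encode (n, m) | n m. eval cf [m] n}"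
    then obtain n m where x: "x = prod_encode (n, m)" "eval cf [m] n" by blast
    then obtain y where "clk cf y [m] = Some n" using clk_complete by blast
    then have "aval e [y, x] = 0" unfolding e_def using x by (simp add: encT_def)
    then show "x \<in> {x. \<exists>y. aval e [y, x] = 0}" by blast
  qed
  then show ?thesis using ce by simp
qed

lemma ce_W2: "ce_set {prod_encode (m, k) | m k. \<exists>m'. (\<exists>v. eval p [prod_encode (m, m')] v) \<and> eval cf [m'] k}"
proof -
  define e where "e = Plus (Minus (K 1) (SGe (Call (T 1 p) (encT p) [fstE (V 0), encE (fstE (V 1)) (sndE (V 0))])))
     (absdiff (Call (T 1 cf) (encT cf) [fstE (V 0), sndE (V 0)]) (Plus (sndE (V 1)) (K 1)))"
  have "awf e 2" unfolding e_def using T1_ok[of cf] T1_ok[of p] by (simp add: numeral_2_eq_2)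
  then have ce: "ce_set {x. \<exists>y. aval e [y, x] = 0}" by (rule ce_search)
  have ae: "aval e [prod_encode (t, m'), prod_encode (m, k)] = 0 \<longleftrightarrow>
      clk p t [prod_encode (m, m')] \<noteq> None \<and> clk cf t [m'] = Some k" for t m' m k
    unfolding e_def by (auto simp: encT_def enc_def split: option.splits)
  have "{x. \<exists>y. aval e [y, x] = 0} = {prod_encode (m, k) | m k. \<exists>m'. (\<exists>v. eval p [prod_encode (m, m')] v) \<and> eval cf [m'] k}"
  proof (intro equalityI subsetI)
    fix x assume "x \<in> {x. \<exists>y. aval e [y, x] = 0}"
    then obtain y where y: "aval e [y, x] = 0" by blast
    obtain t m' where yy: "y = prod_encode (t, m')" by (metis prod_decode_inverse prod.collapse)
    obtain m k where xx: "x = prod_encode (m, k)" by (metis prod_decode_inverse prod.collapse)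
    from y ae yy xx have "clk p t [prod_encode (m, m')] \<noteq> None" "clk cf t [m'] = Some k" by auto
    then have "(\<exists>v. eval p [prod_encode (m, m')] v) \<and> eval cf [m'] k" using clk_sound by blast
    then show "x \<in> {prod_encode (m, k) | m k. \<exists>m'. (\<exists>v. eval p [prod_encode (m, m')] v) \<and> eval cf [m'] k}"
      using xx by blast
  next
    fix x assume "x \<in> {prod_encode (m, k) | m k. \<exists>m'. (\<exists>v. eval p [prod_encode (m, m')] v) \<and> eval cf [m'] k}"
    then obtain m k m' v where x: "x = prod_encode (m, k)" "eval p [prod_encode (m, m')] v" "eval cf [m'] k" by blast
    then obtain t1 t2 where t: "clk p t1 [prod_encode (m, m')] = Some v" "clk cf t2 [m'] = Some k"
      using clk_complete by blast
    then have "clk p (max t1 t2) [prod_encode (m, m')] = Some v" "clk cf (max t1 t2) [m'] = Some k"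
      using clk_mono by (metis max.cobounded1 max.cobounded2)+
    then have "aval e [prod_encode (max t1 t2, m'), x] = 0" using ae x by simp
    then show "x \<in> {x. \<exists>y. aval e [y, x] = 0}" by blast
  qed
  then show ?thesis using ce by simp
qed

lemma topspace_ideal_space: "topspace (ideal_space S R) = {I. is_ideal S R I}"
proof -
  have "\<Union>{basic_open S R n | n. n \<in> S} = {I. is_ideal S R I}"
  proof
    show "{I. is_ideal S R I} \<subseteq> \<Union>{basic_open S R n | n. n \<in> S}"
    proof
      fix I assume "I \<in> {I. is_ideal S R I}"
      then have I: "is_ideal S R I" by simp
      then obtain n where "n \<in> I" unfolding is_ideal_def by blast
      then have "n \<in> S" "I \<in> basic_open S R n" using I unfolding is_ideal_def basic_open_def by auto
      then show "I \<in> \<Union>{basic_open S R n | n. n \<in> S}" by blast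
    qed
  qed (auto simp: basic_open_def)
  then show ?thesis unfolding ideal_space_def topology_generated_by_topspace by simp
qed

lemma openin_basic: "n \<in> S \<Longrightarrow> openin (ideal_space S R) (basic_open S R n)"
  unfolding ideal_space_def by (rule topology_generated_by_Basis) auto

locale setting =
  fixes X Y :: "nat set" and RX RY :: "nat \<Rightarrow> nat \<Rightarrow> bool" and f :: "nat \<Rightarrow> nat"
  assumes surj: "f ` X = Y"
    and hom: "\<forall>x\<in>X. \<forall>x'\<in>X. RX x x' \<longleftrightarrow> RY (f x) (f x')"
begin

definition gmap :: "nat set \<Rightarrow> nat set" where "gmap J = {x\<in>X. f x \<in> J}"

lemma fX: "x \<in> X \<Longrightarrow> f x \<in> Y" using surj by auto

lemma h_ideal: assumes "is_ideal X RX I" shows "is_ideal Y RY (f ` I)"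
proof -
  have I: "I \<noteq> {}" "I \<subseteq> X" "\<forall>a\<in>I. \<forall>b\<in>X. RX b a \<longrightarrow> b \<in> I"
     "\<forall>a\<in>I. \<forall>b\<in>I. \<exists>c\<in>I. RX a c \<and> RX b c" using assms by (auto simp: is_ideal_def)
  show ?thesis unfolding is_ideal_def
  proof (intro conjI ballI impI)
    show "f ` I \<noteq> {}" using I by auto
    show "f ` I \<subseteq> Y" using I surj by auto
  next
    fix a b assume a: "a \<in> f ` I" and b: "b \<in> Y" and r: "RY b a"
    then obtain x where x: "x \<in> I" "a = f x" by auto
    from b surj obtain y where y: "y \<in> X" "b = f y" by auto
    have "RX y x" using hom x y r I by auto
    then show "b \<in> f ` I" using I x y by auto
  next
    fix a b assume "a \<in> f ` I" "b \<in> f ` I"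
    then obtain x y where "x \<in> I" "y \<in> I" "a = f x" "b = f y" by auto
    then obtain c where "c \<in> I" "RX x c" "RX y c" using I by blast
    then show "\<exists>c\<in>f ` I. RY a c \<and> RY b c"
      using hom I \<open>x \<in> I\<close> \<open>y \<in> I\<close> \<open>a = f x\<close> \<open>b = f y\<close> by blast
  qed
qed

lemma g_ideal: assumes "is_ideal Y RY J" shows "is_ideal X RX (gmap J)"
proof -
  have J: "J \<noteq> {}" "J \<subseteq> Y" "\<forall>a\<in>J. \<forall>b\<in>Y. RY b a \<longrightarrow> b \<in> J"
     "\<forall>a\<in>J. \<forall>b\<in>J. \<exists>c\<in>J. RY a c \<and> RY b c" using assms by (auto simp: is_ideal_def)
  show ?thesis unfolding is_ideal_def gmap_def
  proof (intro conjI ballI impI)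
    obtain y where "y \<in> J" using J by blast
    then obtain x where "x \<in> X" "f x = y" using J surj by blast
    then show "{x \<in> X. f x \<in> J} \<noteq> {}" using \<open>y \<in> J\<close> by blast
    show "{x \<in> X. f x \<in> J} \<subseteq> X" by auto
  next
    fix a b assume "a \<in> {x \<in> X. f x \<in> J}" "b \<in> X" "RX b a"
    then have "RY (f b) (f a)" "f a \<in> J" "f b \<in> Y" using hom fX by auto
    then show "b \<in> {x \<in> X. f x \<in> J}" using J \<open>b \<in> X\<close> by blast
  next
    fix a b assume a: "a \<in> {x \<in> X. f x \<in> J}" and b: "b \<in> {x \<in> X. f x \<in> J}"
    have "f a \<in> J" "f b \<in> J" using a b by auto
    then obtain c where c: "c \<in> J" "RY (f a) c" "RY (f b) c" using J(4) by blast
    then have "c \<in> Y" using J by blast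
    then obtain z where z: "z \<in> X" "c = f z" using surj by blast
    have "a \<in> X" "b \<in> X" using a b by auto
    then have "RX a z" "RX b z" using c z hom by auto
    then show "\<exists>c\<in>{x \<in> X. f x \<in> J}. RX a c \<and> RX b c"
      using z c by auto
  qed
qed

lemma gh: assumes "is_ideal X RX I" shows "gmap (f ` I) = I"
proof -
  have I: "I \<subseteq> X" "\<forall>a\<in>I. \<forall>b\<in>X. RX b a \<longrightarrow> b \<in> I"
     "\<forall>a\<in>I. \<forall>b\<in>I. \<exists>c\<in>I. RX a c \<and> RX b c" using assms by (auto simp: is_ideal_def)
  show ?thesis
  proof
    show "I \<subseteq> gmap (f ` I)" using I by (auto simp: gmap_def)
    show "gmap (f ` I) \<subseteq> I"
    proof
      fix x assume "x \<in> gmap (f ` I)"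
      then obtain a where x: "x \<in> X" "a \<in> I" "f x = f a" by (auto simp: gmap_def)
      then obtain c where c: "c \<in> I" "RX a c" using I by blast
      have "a \<in> X" "c \<in> X" using I x c by auto
      then have "RX x c" using hom x c by metis
      then show "x \<in> I" using I c x by blast
    qed
  qed
qed

lemma hg: assumes "is_ideal Y RY J" shows "f ` (gmap J) = J"
proof
  show "f ` gmap J \<subseteq> J" by (auto simp: gmap_def)
  show "J \<subseteq> f ` gmap J"
  proof
    fix y assume "y \<in> J"
    then have "y \<in> Y" using assms unfolding is_ideal_def by blast
    then obtain x where "x \<in> X" "y = f x" using surj by blast
    then show "y \<in> f ` gmap J" using \<open>y \<in> J\<close> unfolding gmap_def by blast
  qed
qed

lemma h_pre: "{I \<in> topspace (ideal_space X RX). f ` I \<in> basic_open Y RY n}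
   = \<Union>{basic_open X RX m | m. m \<in> X \<and> f m = n}"
proof (intro equalityI subsetI)
  fix I assume "I \<in> {I \<in> topspace (ideal_space X RX). f ` I \<in> basic_open Y RY n}"
  then have I: "is_ideal X RX I" "n \<in> f ` I" unfolding topspace_ideal_space basic_open_def by auto
  then obtain m where "m \<in> I" "n = f m" by blast
  moreover then have "m \<in> X" using I unfolding is_ideal_def by blast
  ultimately have "I \<in> basic_open X RX m" "m \<in> X \<and> f m = n" using I unfolding basic_open_def by auto
  then show "I \<in> \<Union>{basic_open X RX m | m. m \<in> X \<and> f m = n}" by blast
next
  fix I assume "I \<in> \<Union>{basic_open X RX m | m. m \<in> X \<and> f m = n}"
  then obtain m where m: "I \<in> basic_open X RX m" "f m = n" by blast
  then have I: "is_ideal X RX I" "m \<in> I" unfolding basic_open_def by auto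
  then have "is_ideal Y RY (f ` I)" "n \<in> f ` I" using h_ideal m by auto
  then show "I \<in> {I \<in> topspace (ideal_space X RX). f ` I \<in> basic_open Y RY n}"
    using I unfolding topspace_ideal_space basic_open_def by auto
qed

lemma g_pre: "{J \<in> topspace (ideal_space Y RY). gmap J \<in> basic_open X RX m}
   = (if m \<in> X then basic_open Y RY (f m) else {})"
proof (intro equalityI subsetI)
  fix J assume "J \<in> {J \<in> topspace (ideal_space Y RY). gmap J \<in> basic_open X RX m}"
  then have "is_ideal Y RY J" "m \<in> gmap J" unfolding topspace_ideal_space basic_open_def by auto
  then show "J \<in> (if m \<in> X then basic_open Y RY (f m) else {})"
    unfolding gmap_def basic_open_def by auto
next
  fix J assume a: "J \<in> (if m \<in> X then basic_open Y RY (f m) else {})"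
  then have m: "m \<in> X" by (cases "m \<in> X") auto
  then have J: "is_ideal Y RY J" "f m \<in> J" using a unfolding basic_open_def by auto
  then have "is_ideal X RX (gmap J)" "m \<in> gmap J" using g_ideal m unfolding gmap_def by auto
  then show "J \<in> {J \<in> topspace (ideal_space Y RY). gmap J \<in> basic_open X RX m}"
    using J unfolding topspace_ideal_space basic_open_def by auto
qed

lemma homeo: "homeomorphic_maps (ideal_space X RX) (ideal_space Y RY) (\<lambda>I. f ` I) gmap"
  unfolding homeomorphic_maps_def
proof (intro conjI ballI)
  show "continuous_map (ideal_space X RX) (ideal_space Y RY) ((`) f)"
    unfolding ideal_space_def[of Y]
  proof (rule continuous_on_generated_topo)
    fix U assume "U \<in> {basic_open Y RY n |n. n \<in> Y}"
    then obtain n where U: "U = basic_open Y RY n" by auto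
    have "(`) f -` U \<inter> topspace (ideal_space X RX) = \<Union>{basic_open X RX m | m. m \<in> X \<and> f m = n}"
      using h_pre[of n] U by auto
    moreover have "openin (ideal_space X RX) \<dots>"
      by (rule openin_Union) (auto intro: openin_basic)
    ultimately show "openin (ideal_space X RX) ((`) f -` U \<inter> topspace (ideal_space X RX))" by simp
  next
    show "(`) f ` topspace (ideal_space X RX) \<subseteq> \<Union> {basic_open Y RY n |n. n \<in> Y}"
      using h_ideal topspace_ideal_space[of X RX] topspace_ideal_space[of Y RY]
      unfolding ideal_space_def by auto
  qed
  show "continuous_map (ideal_space Y RY) (ideal_space X RX) gmap"
    unfolding ideal_space_def[of X]
  proof (rule continuous_on_generated_topo)
    fix U assume "U \<in> {basic_open X RX n |n. n \<in> X}"
    then obtain n where U: "U = basic_open X RX n" "n \<in> X" by auto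
    have "gmap -` U \<inter> topspace (ideal_space Y RY) = basic_open Y RY (f n)"
      using g_pre[of n] U by auto
    then show "openin (ideal_space Y RY) (gmap -` U \<inter> topspace (ideal_space Y RY))"
      using openin_basic fX U by auto
  next
    show "gmap ` topspace (ideal_space Y RY) \<subseteq> \<Union> {basic_open X RX n |n. n \<in> X}"
      using g_ideal topspace_ideal_space[of X RX] topspace_ideal_space[of Y RY]
      unfolding ideal_space_def by auto
  qed
qed (auto simp: topspace_ideal_space gh hg)

lemma inv_eq: assumes "is_ideal Y RY J"
  shows "inv_into (topspace (ideal_space X RX)) ((`) f) J = gmap J"
proof -
  have "inj_on ((`) f) (topspace (ideal_space X RX))"
    by (metis gh inj_on_inverseI mem_Collect_eq topspace_ideal_space)
  then show ?thesis
    by (metis assms g_ideal hg inv_into_f_f mem_Collect_eq topspace_ideal_space)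
qed

end

context setting begin

lemma pre1:
  assumes cf: "\<forall>x\<in>X. eval cf [x] (f x)"
  shows "{I \<in> topspace (ideal_space X RX). f ` I \<in> basic_open Y RY n}
     = \<Union>{basic_open X RX m | m. prod_encode (n, m) \<in> {prod_encode (n, m) | n m. eval cf [m] n}}"
proof -
  have "\<Union>{basic_open X RX m | m. prod_encode (n, m) \<in> {prod_encode (n, m) | n m. eval cf [m] n}}
     = \<Union>{basic_open X RX m | m. m \<in> X \<and> f m = n}"
  proof (intro equalityI subsetI)
    fix I assume "I \<in> \<Union>{basic_open X RX m | m. prod_encode (n, m) \<in> {prod_encode (n, m) | n m. eval cf [m] n}}"
    then obtain m where m: "I \<in> basic_open X RX m" "eval cf [m] n" by auto
    then have "m \<in> X" unfolding basic_open_def is_ideal_def by blast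
    then have "f m = n" using cf m eval_det by blast
    then show "I \<in> \<Union>{basic_open X RX m | m. m \<in> X \<and> f m = n}" using m \<open>m \<in> X\<close> by blast
  next
    fix I assume "I \<in> \<Union>{basic_open X RX m | m. m \<in> X \<and> f m = n}"
    then obtain m where m: "I \<in> basic_open X RX m" "m \<in> X" "f m = n" by blast
    then have "eval cf [m] n" using cf by blast
    then show "I \<in> \<Union>{basic_open X RX m | m. prod_encode (n, m) \<in> {prod_encode (n, m) | n m. eval cf [m] n}}"
      using m by blast
  qed
  then show ?thesis using h_pre by simp
qed

lemma basic_succ:
  assumes "m \<in> X"
  shows "basic_open Y RY (f m) = \<Union>{basic_open Y RY (f m') | m'. m' \<in> X \<and> RX m m'}"
proof (intro equalityI subsetI)
  fix J assume J: "J \<in> basic_open Y RY (f m)"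
  then have Ji: "is_ideal Y RY J" "f m \<in> J" unfolding basic_open_def by auto
  then obtain c where c: "c \<in> J" "RY (f m) c" unfolding is_ideal_def by blast
  then have "c \<in> Y" using Ji unfolding is_ideal_def by blast
  then obtain m' where m': "m' \<in> X" "c = f m'" using surj by blast
  then have "RX m m'" using hom assms c by blast
  then show "J \<in> \<Union>{basic_open Y RY (f m') | m'. m' \<in> X \<and> RX m m'}"
    using m' c Ji unfolding basic_open_def by blast
next
  fix J assume "J \<in> \<Union>{basic_open Y RY (f m') | m'. m' \<in> X \<and> RX m m'}"
  then obtain m' where m': "J \<in> basic_open Y RY (f m')" "m' \<in> X" "RX m m'" by blast
  then have Ji: "is_ideal Y RY J" "f m' \<in> J" unfolding basic_open_def by auto
  have "RY (f m) (f m')" using hom assms m' by blast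
  moreover have "f m \<in> Y" using fX assms by blast
  ultimately have "f m \<in> J" using Ji unfolding is_ideal_def by blast
  then show "J \<in> basic_open Y RY (f m)" using Ji unfolding basic_open_def by blast
qed

lemma pre2:
  assumes cf: "\<forall>x\<in>X. eval cf [x] (f x)"
    and p: "\<forall>x. x \<in> {prod_encode (a, b) | a b. a \<in> X \<and> b \<in> X \<and> RX a b} \<longleftrightarrow> (\<exists>y. eval p [x] y)"
  shows "{J \<in> topspace (ideal_space Y RY). gmap J \<in> basic_open X RX m}
     = \<Union>{basic_open Y RY k | k. prod_encode (m, k) \<in>
          {prod_encode (m, k) | m k. \<exists>m'. (\<exists>v. eval p [prod_encode (m, m')] v) \<and> eval cf [m'] k}}"
proof -
  have W: "prod_encode (m, k) \<in> {prod_encode (m, k) | m k. \<exists>m'. (\<exists>v. eval p [prod_encode (m, m')] v) \<and> eval cf [m'] k}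
     \<longleftrightarrow> (\<exists>m'. m \<in> X \<and> m' \<in> X \<and> RX m m' \<and> k = f m')" for k
  proof
    assume "prod_encode (m, k) \<in> {prod_encode (m, k) | m k. \<exists>m'. (\<exists>v. eval p [prod_encode (m, m')] v) \<and> eval cf [m'] k}"
    then obtain m' v where a: "eval p [prod_encode (m, m')] v" "eval cf [m'] k" by auto
    then have "prod_encode (m, m') \<in> {prod_encode (a, b) | a b. a \<in> X \<and> b \<in> X \<and> RX a b}" using p by blast
    then have b: "m \<in> X" "m' \<in> X" "RX m m'" by auto
    then have "k = f m'" using cf a eval_det by blast
    then show "\<exists>m'. m \<in> X \<and> m' \<in> X \<and> RX m m' \<and> k = f m'" using b by blast
  next
    assume "\<exists>m'. m \<in> X \<and> m' \<in> X \<and> RX m m' \<and> k = f m'"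
    then obtain m' where b: "m \<in> X" "m' \<in> X" "RX m m'" "k = f m'" by blast
    then have "prod_encode (m, m') \<in> {prod_encode (a, b) | a b. a \<in> X \<and> b \<in> X \<and> RX a b}" by blast
    then obtain v where "eval p [prod_encode (m, m')] v" using p by blast
    moreover have "eval cf [m'] k" using cf b by blast
    ultimately show "prod_encode (m, k) \<in> {prod_encode (m, k) | m k. \<exists>m'. (\<exists>v. eval p [prod_encode (m, m')] v) \<and> eval cf [m'] k}"
      by blast
  qed
  show ?thesis
  proof (cases "m \<in> X")
    case True
    have "\<Union>{basic_open Y RY k | k. prod_encode (m, k) \<in>
          {prod_encode (m, k) | m k. \<exists>m'. (\<exists>v. eval p [prod_encode (m, m')] v) \<and> eval cf [m'] k}}
        = \<Union>{basic_open Y RY (f m') | m'. m' \<in> X \<and> RX m m'}"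
      unfolding W using True by blast
    then show ?thesis using g_pre[of m] basic_succ[OF True] True by simp
  next
    case False
    then show ?thesis using g_pre[of m] unfolding W by simp
  qed
qed

end

theorem lemma20:
  fixes X Y :: "nat set" and RX RY :: "nat \<Rightarrow> nat \<Rightarrow> bool" and f :: "nat \<Rightarrow> nat"
  assumes "trans_on_set X RX" and "trans_on_set Y RY"
    and "f ` X = Y"
    and "\<forall>x\<in>X. \<forall>x'\<in>X. RX x x' \<longleftrightarrow> RY (f x) (f x')"
  defines "Gf \<equiv> {prod_encode (x, f x) | x. x \<in> X}"
  shows "homeomorphic_map (ideal_space X RX) (ideal_space Y RY) (induced_map Gf)
         \<and> (ce_rel X RX \<and> ce_rel Y RY \<and> computable_on X f
              \<longrightarrow> computable_homeo X RX Y RY (induced_map Gf))"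
proof -
  interpret S: setting X Y RX RY f using assms(3,4) by unfold_locales
  have ind: "induced_map Gf I = f ` I" if "I \<subseteq> X" for I
    using that unfolding induced_map_def Gf_def by auto
  have indt: "induced_map Gf I = f ` I" if "I \<in> topspace (ideal_space X RX)" for I
    using that ind unfolding topspace_ideal_space is_ideal_def by blast
  have H0: "homeomorphic_map (ideal_space X RX) (ideal_space Y RY) ((`) f)"
    using S.homeo homeomorphic_map_maps by blast
  have H: "homeomorphic_map (ideal_space X RX) (ideal_space Y RY) (induced_map Gf)"
    by (rule homeomorphic_map_eq[OF H0]) (simp add: indt)
  have inj: "inj_on (induced_map Gf) (topspace (ideal_space X RX))"
    using H unfolding homeomorphic_map_def by blast
  have inv: "inv_into (topspace (ideal_space X RX)) (induced_map Gf) J = S.gmap J"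
    if "J \<in> topspace (ideal_space Y RY)" for J
  proof (rule inv_into_f_eq[OF inj])
    have J: "is_ideal Y RY J" using that topspace_ideal_space by blast
    then show "S.gmap J \<in> topspace (ideal_space X RX)" using S.g_ideal topspace_ideal_space by blast
    then show "induced_map Gf (S.gmap J) = J" using indt S.hg J by simp
  qed
  have "computable_homeo X RX Y RY (induced_map Gf)"
    if CE: "ce_rel X RX" "computable_on X f"
  proof -
    obtain cf where cf: "\<forall>x\<in>X. eval cf [x] (f x)" using CE(2) unfolding computable_on_def by blast
    obtain p where p: "\<forall>x. x \<in> {prod_encode (a, b) | a b. a \<in> X \<and> b \<in> X \<and> RX a b} \<longleftrightarrow> (\<exists>y. eval p [x] y)"
      using CE(1) unfolding ce_rel_def ce_set_def by blast
    have C1: "ce_preimages X RX Y RY (induced_map Gf)"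
      unfolding ce_preimages_def
    proof (intro exI conjI allI)
      show "ce_set {prod_encode (n, m) | n m. eval cf [m] n}" by (rule ce_W1)
      fix n
      have "{I \<in> topspace (ideal_space X RX). induced_map Gf I \<in> basic_open Y RY n}
          = {I \<in> topspace (ideal_space X RX). f ` I \<in> basic_open Y RY n}" using indt by auto
      then show "{I \<in> topspace (ideal_space X RX). induced_map Gf I \<in> basic_open Y RY n} =
         \<Union> {basic_open X RX m |m. prod_encode (n, m) \<in> {prod_encode (n, m) | n m. eval cf [m] n}}"
        using S.pre1[OF cf] by simp
    qed
    have C2: "ce_preimages Y RY X RX (inv_into (topspace (ideal_space X RX)) (induced_map Gf))"
      unfolding ce_preimages_def
    proof (intro exI conjI allI)
      show "ce_set {prod_encode (m, k) | m k. \<exists>m'. (\<exists>v. eval p [prod_encode (m, m')] v) \<and> eval cf [m'] k}"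
        by (rule ce_W2)
      fix n
      have "{J \<in> topspace (ideal_space Y RY). inv_into (topspace (ideal_space X RX)) (induced_map Gf) J \<in> basic_open X RX n}
          = {J \<in> topspace (ideal_space Y RY). S.gmap J \<in> basic_open X RX n}" using inv by auto
      then show "{J \<in> topspace (ideal_space Y RY). inv_into (topspace (ideal_space X RX)) (induced_map Gf) J \<in> basic_open X RX n} =
         \<Union> {basic_open Y RY m |m. prod_encode (n, m) \<in>
            {prod_encode (m, k) | m k. \<exists>m'. (\<exists>v. eval p [prod_encode (m, m')] v) \<and> eval cf [m'] k}}"
        using S.pre2[OF cf p] by simp
    qed
    show ?thesis unfolding computable_homeo_def using H C1 C2 by blast
  qed
  then show ?thesis using H by blast
qed


end
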